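(* Let $G$ be a directed $st$-graph and let $b$ be a critical node of $G$. Then every $b$-minimal minimal vertex separator of $G$ is $b$-critical.
   Context: A directed $st$-graph $G=(V,E,s,t)$ is a finite directed graph with no self-loops and no parallel edges, with distinct source $s$ (no incoming edges) and sink $t$ (no outgoing edges), such that every vertex lies on some directed walk from $s$ to $t$. A vertex separator is a set $T\subseteq V$ meeting every $s$–$t$ walk; an mvs is an inclusion-minimal one. For $u\in V$, $A\subseteq V$: $u\sqsubseteq A$ if every directed walk from $u$ to $t$ contains a vertex of $A$; $A\sqsubseteq A'$ if $u\sqsubseteq A'$ for all $u\in A$; $A\sqsubset A'$ means $A\sqsubseteq A'$ and $A\neq A'$. An mvs $T$ is $b$-critical if $b\in T$ and there is $a\in T$ (possibly $a=b$) with a directed walk of length at least one from $a$ to $b$; $b$ is a critical node if some mvs is $b$-critical. An mvs $T$ is $b$-minimal if $b\in T$ and $b\notin T'$ for every mvs $T'$ with $T'\sqsubset T$. *)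

theory Defs
  imports Main
begin

text \<open>A directed walk is a nonempty list of vertices, consecutive ones joined by edges.
  Its length is the number of edges, i.e. length minus one.\<close>
definition is_walk :: "('a \<times> 'a) set \<Rightarrow> 'a list \<Rightarrow> bool" where
  "is_walk E xs \<longleftrightarrow> xs \<noteq> [] \<and> (\<forall>i. Suc i < length xs \<longrightarrow> (xs ! i, xs ! Suc i) \<in> E)"

definition walk_from_to :: "('a \<times> 'a) set \<Rightarrow> 'a \<Rightarrow> 'a \<Rightarrow> 'a list \<Rightarrow> bool" where
  "walk_from_to E u v xs \<longleftrightarrow> is_walk E xs \<and> hd xs = u \<and> last xs = v"

definition st_graph :: "'a set \<Rightarrow> ('a \<times> 'a) set \<Rightarrow> 'a \<Rightarrow> 'a \<Rightarrow> bool" where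
  "st_graph V E s t \<longleftrightarrow>
     finite V \<and> E \<subseteq> V \<times> V \<and> (\<forall>v. (v, v) \<notin> E) \<and>
     s \<in> V \<and> t \<in> V \<and> s \<noteq> t \<and>
     (\<forall>u. (u, s) \<notin> E) \<and> (\<forall>u. (t, u) \<notin> E) \<and>
     (\<forall>v\<in>V. \<exists>xs. walk_from_to E s t xs \<and> v \<in> set xs)"

definition vertex_separator :: "'a set \<Rightarrow> ('a \<times> 'a) set \<Rightarrow> 'a \<Rightarrow> 'a \<Rightarrow> 'a set \<Rightarrow> bool" where
  "vertex_separator V E s t T \<longleftrightarrow>
     T \<subseteq> V \<and> (\<forall>xs. walk_from_to E s t xs \<longrightarrow> set xs \<inter> T \<noteq> {})"

definition mvs :: "'a set \<Rightarrow> ('a \<times> 'a) set \<Rightarrow> 'a \<Rightarrow> 'a \<Rightarrow> 'a set \<Rightarrow> bool" where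
  "mvs V E s t T \<longleftrightarrow> vertex_separator V E s t T \<and>
     (\<forall>T'. T' \<subset> T \<longrightarrow> \<not> vertex_separator V E s t T')"

definition node_below :: "('a \<times> 'a) set \<Rightarrow> 'a \<Rightarrow> 'a \<Rightarrow> 'a set \<Rightarrow> bool" where
  "node_below E t u A \<longleftrightarrow> (\<forall>xs. walk_from_to E u t xs \<longrightarrow> set xs \<inter> A \<noteq> {})"

definition set_below :: "('a \<times> 'a) set \<Rightarrow> 'a \<Rightarrow> 'a set \<Rightarrow> 'a set \<Rightarrow> bool" where
  "set_below E t A A' \<longleftrightarrow> (\<forall>u\<in>A. node_below E t u A')"

definition set_strictly_below :: "('a \<times> 'a) set \<Rightarrow> 'a \<Rightarrow> 'a set \<Rightarrow> 'a set \<Rightarrow> bool" where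
  "set_strictly_below E t A A' \<longleftrightarrow> set_below E t A A' \<and> A \<noteq> A'"

definition b_critical :: "'a set \<Rightarrow> ('a \<times> 'a) set \<Rightarrow> 'a \<Rightarrow> 'a \<Rightarrow> 'a \<Rightarrow> 'a set \<Rightarrow> bool" where
  "b_critical V E s t b T \<longleftrightarrow> mvs V E s t T \<and> b \<in> T \<and>
     (\<exists>a\<in>T. \<exists>xs. walk_from_to E a b xs \<and> length xs \<ge> 2)"

definition critical_node :: "'a set \<Rightarrow> ('a \<times> 'a) set \<Rightarrow> 'a \<Rightarrow> 'a \<Rightarrow> 'a \<Rightarrow> bool" where
  "critical_node V E s t b \<longleftrightarrow> (\<exists>T. b_critical V E s t b T)"

definition b_minimal :: "'a set \<Rightarrow> ('a \<times> 'a) set \<Rightarrow> 'a \<Rightarrow> 'a \<Rightarrow> 'a \<Rightarrow> 'a set \<Rightarrow> bool" where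
  "b_minimal V E s t b T \<longleftrightarrow> mvs V E s t T \<and> b \<in> T \<and>
     (\<forall>T'. mvs V E s t T' \<and> set_strictly_below E t T' T \<longrightarrow> b \<notin> T')"

end

theory Submission
  imports Defs
begin

lemma walk_single[simp]: "is_walk E [x]"
  by (simp add: is_walk_def)

lemma walk_Cons2[simp]: "is_walk E (x # y # zs) \<longleftrightarrow> (x,y) \<in> E \<and> is_walk E (y # zs)"
  unfolding is_walk_def
  by (auto simp: nth_Cons split: nat.splits)

lemma walk_append: "is_walk E (xs @ x # ys) \<longleftrightarrow> is_walk E (xs @ [x]) \<and> is_walk E (x # ys)"
proof (induction xs)
  case Nil then show ?case by simp
next
  case (Cons a xs)
  then show ?case by (cases xs) auto
qed

lemma walk_concat:
  assumes "walk_from_to E u v xs" "walk_from_to E v w ys"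
  shows "walk_from_to E u w (xs @ tl ys)"
proof -
  obtain ys' where ys: "ys = v # ys'" using assms(2) unfolding walk_from_to_def is_walk_def
    by (cases ys) auto
  have xne: "xs \<noteq> []" using assms(1) unfolding walk_from_to_def is_walk_def by auto
  then have xs: "xs = butlast xs @ [v]" using assms(1) unfolding walk_from_to_def
    by (metis append_butlast_last_id)
  have "is_walk E (butlast xs @ v # ys')"
    using walk_append[of E "butlast xs" v ys'] assms xs ys unfolding walk_from_to_def by metis
  then have "is_walk E (xs @ tl ys)" using xs ys by (metis append.assoc append_Cons append_Nil list.sel(3))
  moreover have "hd (xs @ tl ys) = u" using xne assms(1) unfolding walk_from_to_def by simp
  moreover have "last (xs @ tl ys) = w"
    using assms xs ys unfolding walk_from_to_def by (cases ys') auto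
  ultimately show ?thesis unfolding walk_from_to_def by simp
qed

lemma walk_suffix:
  assumes "walk_from_to E u v (p @ y # q)"
  shows "walk_from_to E y v (y # q)"
  using assms walk_append[of E p y q] unfolding walk_from_to_def by (cases q) auto

lemma walk_prefix:
  assumes "walk_from_to E u v (p @ y # q)"
  shows "walk_from_to E u y (p @ [y])"
  using assms walk_append[of E p y q] unfolding walk_from_to_def by (cases p) auto

lemma walk_mid:
  assumes "walk_from_to E u v (p @ [v])" "y \<in> set p"
  shows "\<exists>q. walk_from_to E y v (y # q @ [v])"
proof -
  obtain p1 p2 where "p = p1 @ y # p2" using assms(2) by (meson split_list)
  then have "walk_from_to E u v (p1 @ y # (p2 @ [v]))" using assms(1) by simp
  then show ?thesis using walk_suffix by fastforce
qed

lemma mvs_witness: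
  assumes "mvs V E s t T0" "x \<in> T0"
  shows "\<exists>xs. walk_from_to E s t xs \<and> set xs \<inter> T0 \<subseteq> {x} \<and> x \<in> set xs"
proof -
  have "T0 - {x} \<subset> T0" using assms(2) by auto
  then have "\<not> vertex_separator V E s t (T0 - {x})" using assms(1) unfolding mvs_def by blast
  moreover have "T0 - {x} \<subseteq> V" using assms(1) unfolding mvs_def vertex_separator_def by auto
  ultimately obtain xs where xs: "walk_from_to E s t xs" "set xs \<inter> (T0 - {x}) = {}"
    unfolding vertex_separator_def by auto
  moreover have "set xs \<inter> T0 \<noteq> {}" using assms(1) xs unfolding mvs_def vertex_separator_def by auto
  ultimately show ?thesis by auto
qed

theorem theorem3:
  assumes "st_graph V E s t"
    and "critical_node V E s t b"
    and "b_minimal V E s t b T"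
  shows "b_critical V E s t b T"
proof (rule ccontr)
  assume nc: "\<not> b_critical V E s t b T"
  have mT: "mvs V E s t T" and bT: "b \<in> T"
    and bmin: "\<And>T'. mvs V E s t T' \<Longrightarrow> set_strictly_below E t T' T \<Longrightarrow> b \<notin> T'"
    using assms(3) unfolding b_minimal_def by auto
  have noreach: "\<And>a xs. a \<in> T \<Longrightarrow> walk_from_to E a b xs \<Longrightarrow> length xs < 2"
    using nc mT bT unfolding b_critical_def by force
  obtain T0 a0 xs0 where mT0: "mvs V E s t T0" and bT0: "b \<in> T0" and a0: "a0 \<in> T0"
    and xs0: "walk_from_to E a0 b xs0" "length xs0 \<ge> 2"
    using assms(2) unfolding critical_node_def b_critical_def by blast
  have sepT: "\<And>xs. walk_from_to E s t xs \<Longrightarrow> set xs \<inter> T \<noteq> {}" and TV: "T \<subseteq> V"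
    using mT unfolding mvs_def vertex_separator_def by auto
  have sepT0: "\<And>xs. walk_from_to E s t xs \<Longrightarrow> set xs \<inter> T0 \<noteq> {}" and T0V: "T0 \<subseteq> V"
    using mT0 unfolding mvs_def vertex_separator_def by auto
  define F where "F = {x \<in> T \<union> T0. \<exists>xs. walk_from_to E s x xs \<and> set xs \<inter> (T \<union> T0) \<subseteq> {x}}"
  define M where "M = {x \<in> F. \<exists>xs. walk_from_to E x t xs \<and> set xs \<inter> F \<subseteq> {x}}"
  have G: "x \<in> M" if xF: "x \<in> F" and w: "walk_from_to E x t (x # zs)" and zs: "set zs \<inter> T0 = {}" for x zs
  proof -
    have "w \<notin> F" if wz: "w \<in> set zs" for w
    proof
      assume wF: "w \<in> F"
      then obtain p where p: "walk_from_to E s w p" "set p \<inter> (T \<union> T0) \<subseteq> {w}" unfolding F_def by auto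
      have "w \<notin> T0" using wz zs by auto
      with p have pT0: "set p \<inter> T0 = {}" by auto
      obtain z1 z2 where "zs = z1 @ w # z2" using wz by (meson split_list)
      then have "walk_from_to E w t (w # z2)" using w walk_suffix[of E x t "x # z1" w z2] by simp
      then have wk: "walk_from_to E s t (p @ tl (w # z2))" using walk_concat[OF p(1)] by blast
      have "set (p @ tl (w # z2)) \<inter> T0 = {}" using pT0 zs \<open>zs = z1 @ w # z2\<close> by auto
      then show False using sepT0 wk by blast
    qed
    then have "set (x # zs) \<inter> F \<subseteq> {x}" by auto
    then show ?thesis unfolding M_def using xF w by blast
  qed
  have split0: "\<exists>ys zs. walk_from_to E s t (ys @ x # zs) \<and> set (ys @ x # zs) \<inter> T0 \<subseteq> {x} \<and> x \<notin> set zs"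
    if xT0: "x \<in> T0" for x
  proof -
    obtain xs where xs: "walk_from_to E s t xs" "set xs \<inter> T0 \<subseteq> {x}" "x \<in> set xs"
      using mvs_witness[OF mT0 xT0] by blast
    obtain ys zs where "xs = ys @ x # zs" "\<forall>y\<in>set zs. \<not> y = x"
      using split_list_last_prop[of xs "\<lambda>y. y = x"] xs(3) by blast
    then show ?thesis using xs by auto
  qed
  have a0T: "a0 \<notin> T" using noreach xs0 by force
  obtain ys zs where Q: "walk_from_to E s t (ys @ a0 # zs)" "set (ys @ a0 # zs) \<inter> T0 \<subseteq> {a0}" "a0 \<notin> set zs"
    using split0[OF a0] by blast
  have a0F: "a0 \<in> F"
  proof -
    have pw: "walk_from_to E s a0 (ys @ [a0])" using walk_prefix[OF Q(1)] by blast
    have "y \<notin> T" if yys: "y \<in> set ys" for y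
    proof
      assume yT: "y \<in> T"
      obtain q where q: "walk_from_to E y a0 (y # q @ [a0])" using walk_mid[OF pw yys] by blast
      have "walk_from_to E y b ((y # q @ [a0]) @ tl xs0)" using walk_concat[OF q xs0(1)] by blast
      moreover have "length ((y # q @ [a0]) @ tl xs0) \<ge> 2" by simp
      ultimately show False using noreach yT by force
    qed
    then have "set (ys @ [a0]) \<inter> (T \<union> T0) \<subseteq> {a0}" using Q(2) a0T by auto
    then show ?thesis unfolding F_def using pw a0 by blast
  qed
  have a0M: "a0 \<in> M"
  proof (rule G[OF a0F])
    show "walk_from_to E a0 t (a0 # zs)" using walk_suffix[OF Q(1)] by blast
    show "set zs \<inter> T0 = {}" using Q(2,3) by auto
  qed
  obtain ys' zs' where P: "walk_from_to E s t (ys' @ b # zs')" "set (ys' @ b # zs') \<inter> T0 \<subseteq> {b}" "b \<notin> set zs'"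
    using split0[OF bT0] by blast
  have bF: "b \<in> F"
  proof -
    have pw: "walk_from_to E s b (ys' @ [b])" using walk_prefix[OF P(1)] by blast
    have "y \<notin> T" if yys: "y \<in> set ys'" for y
    proof
      assume yT: "y \<in> T"
      obtain q where q: "walk_from_to E y b (y # q @ [b])" using walk_mid[OF pw yys] by blast
      then show False using noreach yT by force
    qed
    then have "set (ys' @ [b]) \<inter> (T \<union> T0) \<subseteq> {b}" using P(2) by auto
    then show ?thesis unfolding F_def using pw bT by blast
  qed
  have bM: "b \<in> M"
  proof (rule G[OF bF])
    show "walk_from_to E b t (b # zs')" using walk_suffix[OF P(1)] by blast
    show "set zs' \<inter> T0 = {}" using P(2,3) by auto
  qed
  have MF: "M \<subseteq> F" and FTT: "F \<subseteq> T \<union> T0" unfolding M_def F_def by auto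
  have sepM: "set xs \<inter> M \<noteq> {}" if xs: "walk_from_to E s t xs" for xs
  proof -
    have "set xs \<inter> T \<noteq> {}" using sepT xs by blast
    then have "\<exists>x\<in>set xs. x \<in> T \<union> T0" by auto
    then obtain ys x zs where sp: "xs = ys @ x # zs" "x \<in> T \<union> T0" "\<forall>y\<in>set ys. y \<notin> T \<union> T0"
      using split_list_first_prop[of xs "\<lambda>y. y \<in> T \<union> T0"] by blast
    have "walk_from_to E s x (ys @ [x])" using walk_prefix[of E s t ys x zs] xs sp(1) by simp
    moreover have "set (ys @ [x]) \<inter> (T \<union> T0) \<subseteq> {x}" using sp(3) by auto
    ultimately have "x \<in> F" unfolding F_def using sp(2) by blast
    then have "\<exists>x\<in>set xs. x \<in> F" using sp(1) by auto
    then obtain ys2 x2 zs2 where sp2: "xs = ys2 @ x2 # zs2" "x2 \<in> F" "\<forall>y\<in>set zs2. y \<notin> F"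
      using split_list_last_prop[of xs "\<lambda>y. y \<in> F"] by blast
    have "walk_from_to E x2 t (x2 # zs2)" using walk_suffix[of E s t ys2 x2 zs2] xs sp2(1) by simp
    moreover have "set (x2 # zs2) \<inter> F \<subseteq> {x2}" using sp2(3) by auto
    ultimately have "x2 \<in> M" unfolding M_def using sp2(2) by blast
    then show ?thesis using sp2(1) by auto
  qed
  have minM: "\<not> vertex_separator V E s t T'" if sub: "T' \<subset> M" for T'
  proof
    assume vs: "vertex_separator V E s t T'"
    obtain x where x: "x \<in> M" "x \<notin> T'" using sub by blast
    obtain p where p: "walk_from_to E s x p" "set p \<inter> (T \<union> T0) \<subseteq> {x}"
      using x MF unfolding F_def by auto
    obtain q where q: "walk_from_to E x t q" "set q \<inter> F \<subseteq> {x}" using x unfolding M_def by auto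
    have wk: "walk_from_to E s t (p @ tl q)" using walk_concat[OF p(1) q(1)] by blast
    have "set (p @ tl q) \<inter> T' = {}"
    proof -
      have "y \<notin> T'" if y: "y \<in> set (p @ tl q)" for y
      proof
        assume yT': "y \<in> T'"
        have yM: "y \<in> M" using yT' sub by blast
        have yF: "y \<in> F" using yM MF by blast
        have yTT: "y \<in> T \<union> T0" using yF FTT by blast
        have yx: "y \<noteq> x" using yT' x(2) by blast
        have "y \<in> set p \<or> y \<in> set q" using y by (cases q) auto
        then show False
        proof
          assume "y \<in> set p" then show False using p(2) yTT yx by blast
        next
          assume "y \<in> set q" then show False using q(2) yF yx by blast
        qed
      qed
      then show ?thesis by blast
    qed
    then show False using vs wk unfolding vertex_separator_def by blast
  qed
  have MV: "M \<subseteq> V" using MF FTT TV T0V by blast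
  have mM: "mvs V E s t M"
    unfolding mvs_def
  proof (intro conjI allI impI)
    show "vertex_separator V E s t M" unfolding vertex_separator_def using MV sepM by blast
  next
    fix T' assume "T' \<subset> M" then show "\<not> vertex_separator V E s t T'" by (rule minM)
  qed
  have below: "set_below E t M T"
    unfolding set_below_def node_below_def
  proof (intro ballI allI impI)
    fix x xs assume xM: "x \<in> M" and xs: "walk_from_to E x t xs"
    show "set xs \<inter> T \<noteq> {}"
    proof (cases "x \<in> T")
      case True
      then show ?thesis using xs unfolding walk_from_to_def is_walk_def
        by (metis disjoint_iff list.set_sel(1))
    next
      case False
      obtain p where p: "walk_from_to E s x p" "set p \<inter> (T \<union> T0) \<subseteq> {x}"
        using xM MF unfolding F_def by auto
      have pT: "set p \<inter> T = {}" using p(2) False by auto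
      have wk: "walk_from_to E s t (p @ tl xs)" using walk_concat[OF p(1) xs] by blast
      then obtain y where "y \<in> set (p @ tl xs)" "y \<in> T" using sepT by blast
      then have "y \<in> set (tl xs)" using pT by auto
      then have "y \<in> set xs" by (cases xs) auto
      then show ?thesis using \<open>y \<in> T\<close> by blast
    qed
  qed
  have "M \<noteq> T" using a0M a0T by blast
  then have "set_strictly_below E t M T" using below unfolding set_strictly_below_def by simp
  then have "b \<notin> M" using bmin mM by blast
  then show False using bM by blast
qed

end
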